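(* Let $p,q$ be odd primes with $q-p=2$, and let $D=D_1\cdots D_n$ with $D_1,\dots,D_n$ distinct primes, $2\nmid D$, $p\nmid D$, $q\nmid D$. Let $E=E_-:y^2=x(x-pD)(x-qD)$. (A$_1$) $2\in S^{(\varphi)}(E/\mathbb{Q})$ iff $p\equiv7\pmod8$ and $D_i\equiv1,7\pmod8$ for all $1\le i\le n$. (A$_2$) $-2\in S^{(\varphi)}(E/\mathbb{Q})$ iff $p\equiv1\pmod8$ and $D_i\equiv1,3\pmod8$ for all $1\le i\le n$. (B$_1$) For each $1\le i\le n$: $D_i\in S^{(\varphi)}(E/\mathbb{Q})$ iff $D_i\equiv1\pmod4$ and $(\frac{D_j}{D_i})=(\frac{p}{D_i})=(\frac{q}{D_i})=1$ for all $1\le j\le n$, $j\ne i$. (B$_2$) For each $1\le i\le n$: $-D_i\in S^{(\varphi)}(E/\mathbb{Q})$ iff $D_i\equiv3\pmod4$ and $(\frac{D_j}{D_i})=(\frac{p}{D_i})=(\frac{q}{D_i})=1$ for all $1\le j\le n$, $j\ne i$.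
   Context: $(\frac{\cdot}{\cdot})$ is the Legendre symbol. $\varphi:E\to E'$, $E':y^2=x^3+2(p+q)Dx^2+4D^2x$, is the $2$-isogeny $(x,y)\mapsto(y^2/x^2,\ y(pqD^2-x^2)/x^2)$. With $S=\{\infty,2,p,q,D_1,\dots,D_n\}$ and $\mathbb{Q}(S,2)=\langle -1,2,p,q,D_1,\dots,D_n\rangle\subset\mathbb{Q}^\star/\mathbb{Q}^{\star2}$, $S^{(\varphi)}(E/\mathbb{Q})$ is the set of $d\in\mathbb{Q}(S,2)$ (squarefree representatives) such that $C_d: dw^2=d^2+2(p+q)Ddz^2+4D^2z^4$ has a $\mathbb{Q}_v$-point for all $v\in S$. *)

theory Defs
  imports "HOL-Number_Theory.Number_Theory" "HOL-Computational_Algebra.Squarefree"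
begin

text \<open>The quartic C_d : d w^2 = d^2 + 2(p+q) D d z^2 + 4 D^2 z^4, written in weighted
 homogeneous coordinates (T : Z : W) of weights (1,1,2):
   d W^2 = d^2 T^4 + 2(p+q) D d Z^2 T^2 + 4 D^2 Z^4.\<close>

definition Cd_form :: "'a::comm_ring_1 \<Rightarrow> 'a \<Rightarrow> 'a \<Rightarrow> 'a \<Rightarrow> 'a \<Rightarrow> 'a \<Rightarrow> 'a \<Rightarrow> 'a" where
  "Cd_form p q D d T Z W =
     d * W^2 - (d^2 * T^4 + 2 * (p + q) * D * d * Z^2 * T^2 + 4 * D^2 * Z^4)"

definition Cd_real_point :: "int \<Rightarrow> int \<Rightarrow> int \<Rightarrow> int \<Rightarrow> bool" where
  "Cd_real_point p q D d \<longleftrightarrow>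
     (\<exists>T Z W :: real. (T, Z) \<noteq> (0, 0) \<and>
        Cd_form (of_int p) (of_int q) (of_int D) (of_int d) T Z W = 0)"

text \<open>By compactness of Z_l, a primitive Z_l-solution
 (T,Z not both divisible by l; then W is automatically l-integral since d is squarefree)
 exists iff the equation is solvable modulo l^k with such a primitive solution for every k.\<close>
definition Cd_local_point :: "int \<Rightarrow> int \<Rightarrow> int \<Rightarrow> int \<Rightarrow> int \<Rightarrow> bool" where
  "Cd_local_point l p q D d \<longleftrightarrow>
     (\<forall>k::nat. \<exists>T Z W :: int. \<not> (l dvd T \<and> l dvd Z) \<and>
        [Cd_form p q D d T Z W = 0] (mod l ^ k))"

text \<open>S = {\<infinity>, 2, p, q, D_1, ..., D_n}; Q(S,2) represented by squarefree integers whose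
 prime divisors lie in S.\<close>
definition finite_S :: "int \<Rightarrow> int \<Rightarrow> int list \<Rightarrow> int set" where
  "finite_S p q Ds = {2, p, q} \<union> set Ds"

definition QS2 :: "int \<Rightarrow> int \<Rightarrow> int list \<Rightarrow> int set" where
  "QS2 p q Ds = {d. d \<noteq> 0 \<and> squarefree d \<and>
                   (\<forall>l. prime l \<and> l dvd d \<longrightarrow> l \<in> finite_S p q Ds)}"

definition selmer_phi :: "int \<Rightarrow> int \<Rightarrow> int list \<Rightarrow> int set" where
  "selmer_phi p q Ds = {d \<in> QS2 p q Ds.
      Cd_real_point p q (prod_list Ds) d \<and>
      (\<forall>l \<in> finite_S p q Ds. Cd_local_point l p q (prod_list Ds) d)}"

end

theory Submission
  imports Defs
begin

lemma hensel_odd_aux: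
  fixes l c :: int
  assumes l: "prime l" "odd l" and nc: "\<not> l dvd c" and qr: "QuadRes l c"
  shows "\<exists>x. [x^2 = c] (mod l^(Suc k)) \<and> \<not> l dvd x"
proof (induction k)
  case 0
  from qr obtain y where y: "[y^2 = c] (mod l)" unfolding QuadRes_def by blast
  have "\<not> l dvd y"
  proof
    assume "l dvd y"
    then have "l dvd y^2" by (simp add: power2_eq_square)
    with y have "l dvd c" using cong_dvd_iff by blast
    with nc show False by simp
  qed
  with y show ?case by auto
next
  case (Suc k)
  then obtain x where x: "[x^2 = c] (mod l^(Suc k))" and nx: "\<not> l dvd x" by blast
  from x obtain m where m: "x^2 - c = l^(Suc k) * m"
    unfolding cong_iff_dvd_diff by (auto elim: dvdE)
  have cop: "coprime (2*x) l"
  proof -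
    have "\<not> l dvd 2*x"
    proof
      assume "l dvd 2*x"
      then have "l dvd 2 \<or> l dvd x" using l prime_dvd_mult_iff by blast
      moreover have "\<not> l dvd 2"
        using l zdvd_imp_le[of l 2] prime_ge_2_int[of l] by force
      ultimately show False using nx by blast
    qed
    then show ?thesis using l prime_imp_coprime[of l "2*x"] coprime_commute by blast
  qed
  then obtain u where u: "[2*x*u = 1] (mod l)" using cong_solve_coprime_int by blast
  define t where "t = - m * u"
  define y where "y = x + t * l^(Suc k)"
  have e1: "l^(2*Suc k) = (l^(Suc k))^2" by (simp only: mult.commute[of 2] power_mult)
  have "y^2 - c = (x^2 - c) + l^(Suc k) * (2*x*t) + t^2 * (l^(Suc k))^2"
    unfolding y_def by (simp add: power2_eq_square algebra_simps)
  then have "y^2 - c = l^(Suc k) * (m + 2*x*t) + t^2 * l^(2*Suc k)"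
    unfolding e1 m by (simp add: algebra_simps)
  moreover have "l dvd m + 2*x*t"
  proof -
    have "[m + 2*x*t = m + m * (-(2*x*u))] (mod l)" unfolding t_def by (simp add: algebra_simps)
    moreover have "[m + m * (-(2*x*u)) = m + m*(-1)] (mod l)"
      using u by (intro cong_add cong_mult cong_refl cong_uminus)
    ultimately show ?thesis by (simp add: cong_0_iff[symmetric] cong_trans)
  qed
  then have "l^(Suc (Suc k)) dvd l^(Suc k) * (m + 2*x*t)" by simp
  moreover have "l^(Suc (Suc k)) dvd t^2 * l^(2*Suc k)"
    by (intro dvd_mult le_imp_power_dvd) simp
  ultimately have "l^(Suc (Suc k)) dvd y^2 - c" by simp
  moreover have "\<not> l dvd y"
  proof
    assume "l dvd y"
    moreover have "l dvd t * l^(Suc k)" by simp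
    ultimately have "l dvd x" unfolding y_def by (metis dvd_add_left_iff)
    with nx show False by simp
  qed
  ultimately show ?case by (auto simp: cong_iff_dvd_diff)
qed

lemma hensel_odd:
  fixes l c :: int
  assumes "prime l" "odd l" "\<not> l dvd c" "QuadRes l c"
  shows "\<exists>x. [x^2 = c] (mod l^k)"
proof (cases k)
  case 0 then show ?thesis by simp
next
  case (Suc k') then show ?thesis using hensel_odd_aux[OF assms, of k'] by blast
qed

lemma hensel_two_aux:
  fixes c :: int
  assumes c: "c mod 8 = 1"
  shows "\<exists>x. [x^2 = c] (mod 2^(k+3)) \<and> odd x"
proof (induction k)
  case 0
  have "[1^2 = c] (mod 2^3)" using c by (simp add: cong_def)
  then show ?case by (intro exI[of _ 1]) simp
next
  case (Suc k)
  then obtain x where x: "[x^2 = c] (mod 2^(k+3))" and ox: "odd x" by blast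
  from x obtain m where m: "x^2 - c = 2^(k+3) * m"
    unfolding cong_iff_dvd_diff by (auto elim: dvdE)
  show ?case
  proof (cases "even m")
    case True
    then obtain m' where "m = 2*m'" by blast
    with m have "x^2 - c = 2^(Suc k+3) * m'" by (simp add: power_add)
    then show ?thesis using ox unfolding cong_iff_dvd_diff by (intro exI[of _ x]) simp
  next
    case False
    define y where "y = x + 2^(k+2)"
    have e0: "2*k+4 = (k+2)*2" by simp
    have e1: "(2::int)^(2*k+4) = (2^(k+2))^2" by (simp only: e0 power_mult)
    have e2: "(2::int)^(k+3) = 2 * 2^(k+2)" by (simp add: power_add)
    have "y^2 - c = (x^2 - c) + 2 * 2^(k+2) * x + (2^(k+2))^2"
      unfolding y_def by (simp add: power2_eq_square algebra_simps)
    then have "y^2 - c = 2^(k+3) * (m + x) + 2^(2*k+4)"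
      unfolding e1 m e2 by (simp add: algebra_simps)
    moreover have "even (m + x)" using False ox by simp
    then obtain j where "m + x = 2*j" by blast
    then have "2^(k+4) dvd 2^(k+3) * (m + x)" by (simp add: power_add)
    moreover have "(2::int)^(k+4) dvd 2^(2*k+4)" by (intro le_imp_power_dvd) simp
    ultimately have "2^(k+4) dvd y^2 - c" by (simp only: dvd_add)
    then have "2^(Suc k+3) dvd y^2 - c" by (simp add: add.commute)
    moreover have "odd y" unfolding y_def using ox by simp
    ultimately show ?thesis unfolding cong_iff_dvd_diff by blast
  qed
qed

lemma hensel_two:
  fixes c :: int
  assumes c: "c mod 8 = 1"
  shows "\<exists>x. [x^2 = c] (mod 2^k)"
proof -
  obtain x where "[x^2 = c] (mod 2^(k+3))" using hensel_two_aux[OF c, of k] by blast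
  moreover have "(2::int)^k dvd 2^(k+3)" by (intro le_imp_power_dvd) simp
  ultimately show ?thesis using cong_dvd_modulus by blast
qed

lemma leg_euler:
  fixes p a :: int
  assumes "prime p" "p > 2"
  shows "[Legendre a p = a ^ nat ((p - 1) div 2)] (mod p)"
proof -
  have "prime (nat p)" "2 < nat p" using assms by auto
  from euler_criterion[OF this, of a] have "[Legendre a (int (nat p)) = a ^ ((nat p - 1) div 2)] (mod int (nat p))" .
  moreover have "(nat p - 1) div 2 = nat ((p - 1) div 2)" using assms by (simp add: nat_div_distrib nat_diff_distrib)
  ultimately show ?thesis using assms by simp
qed

lemma leg_vals: "Legendre a p \<in> {-1, 0, 1}"
  unfolding Legendre_def by auto

lemma small_cong_eq:
  fixes x y p :: int
  assumes "x \<in> {-1,0,1}" "y \<in> {-1,0,1}" "p > 2" "[x = y] (mod p)"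
  shows "x = y"
proof -
  from assms(4) have "p dvd x - y" by (simp add: cong_iff_dvd_diff)
  moreover have "\<bar>x - y\<bar> < p" using assms(1-3) by auto
  ultimately show ?thesis using assms(3) dvd_imp_le_int[of "x-y" p] by fastforce
qed

lemma leg_mult:
  fixes p a b :: int
  assumes "prime p" "p > 2"
  shows "Legendre (a*b) p = Legendre a p * Legendre b p"
proof -
  have A: "[Legendre (a*b) p = a ^ nat ((p - 1) div 2) * b ^ nat ((p - 1) div 2)] (mod p)"
    using leg_euler[OF assms, of "a*b"] by (simp add: power_mult_distrib)
  moreover have B: "[Legendre a p * Legendre b p = a ^ nat ((p - 1) div 2) * b ^ nat ((p - 1) div 2)] (mod p)"
    using leg_euler[OF assms] by (intro cong_mult)
  ultimately have "[Legendre (a*b) p = Legendre a p * Legendre b p] (mod p)"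
    by (meson cong_sym cong_trans)
  moreover have "Legendre a p * Legendre b p \<in> {-1,0,1}" using leg_vals[of a p] leg_vals[of b p] by auto
  ultimately show ?thesis using small_cong_eq[OF leg_vals _ assms(2)] by blast
qed

lemma leg_neg1:
  fixes p :: int
  assumes "prime p" "p > 2"
  shows "Legendre (-1) p = (if p mod 4 = 1 then 1 else -1)"
proof -
  have "[Legendre (-1) p = (-1) ^ nat ((p - 1) div 2)] (mod p)" using leg_euler[OF assms] .
  moreover have odd: "odd p" using assms prime_odd_int by auto
  have "(-1::int) ^ nat ((p - 1) div 2) = (if p mod 4 = 1 then 1 else -1)"
  proof (cases "p mod 4 = 1")
    case True
    then have "even (nat ((p - 1) div 2))" using assms by (subst even_nat_iff) presburger+
    then show ?thesis using True by simp
  next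
    case False
    then have "odd (nat ((p - 1) div 2))" using assms odd by (subst even_nat_iff) presburger+
    then show ?thesis using False by simp
  qed
  ultimately show ?thesis using small_cong_eq[of "Legendre (-1) p" _ p] leg_vals assms(2) by auto
qed

lemma leg_two:
  fixes p :: int
  assumes pr: "prime p" and p2: "p > 2"
  shows "Legendre 2 p = (if p mod 8 = 1 \<or> p mod 8 = 7 then 1 else -1)"
proof -
  have odd: "odd p" using assms prime_odd_int by auto
  have np: "prime (nat p)" "2 < nat p" using assms by auto
  have rel: "[2 \<noteq> 0] (mod int (nat p))"
  proof
    assume "[2 = 0] (mod int (nat p))"
    then have "p dvd 2" using p2 by (simp add: cong_0_iff)
    then show False using p2 zdvd_imp_le[of p 2] by auto
  qed
  interpret G: GAUSS "nat p" 2 using np rel by unfold_locales auto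
  define h where "h = (p - 1) div 2"
  have pp: "int (nat p) = p" using p2 by simp
  have C: "G.C = (\<lambda>x. 2*x) ` {0<..h}"
    unfolding G.C_def G.B_def G.A_def pp h_def
  proof -
    have "(\<lambda>x. x mod p) ` (\<lambda>x. x * 2) ` {0<..(p - 1) div 2} = (\<lambda>x. x * 2) ` {0<..(p - 1) div 2}"
      by (rule image_cong[OF refl, of _ _ id, simplified]) (use odd in auto)
    then show "(\<lambda>x. x mod p) ` (\<lambda>x. x * 2) ` {0<..(p - 1) div 2} = (\<lambda>x. 2*x) ` {0<..(p - 1) div 2}"
      by (simp add: mult.commute)
  qed
  have E: "G.E = (\<lambda>x. 2*x) ` {h div 2<..h}"
    unfolding G.E_def C pp h_def[symmetric] by auto
  have "card G.E = card {h div 2<..h}" unfolding E by (rule card_image) (auto simp: inj_on_def)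
  then have cE: "card G.E = nat (h - h div 2)" by simp
  have "Legendre 2 p = (-1) ^ nat (h - h div 2)" using G.gauss_lemma pp cE by simp
  moreover have "even (nat (h - h div 2)) \<longleftrightarrow> (p mod 8 = 1 \<or> p mod 8 = 7)"
    using odd p2 unfolding h_def by (subst even_nat_iff) presburger+
  ultimately show ?thesis by auto
qed

lemma Cd_form_int: "Cd_form p q D d T Z W = d*W^2 - (d^2*T^4 + 2*(p+q)*D*d*Z^2*T^2 + 4*D^2*Z^4)"
  by (simp add: Cd_form_def)

lemma loc_from_sqrt:
  fixes l d p q D :: int
  assumes "prime l" "\<forall>k. \<exists>x. [x^2 = d] (mod l^k)"
  shows "Cd_local_point l p q D d"
  unfolding Cd_local_point_def
proof
  fix k
  obtain x where x: "[x^2 = d] (mod l^k)" using assms(2) by blast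
  have "[d*x^2 = d*d] (mod l^k)" using x by (intro cong_mult cong_refl)
  then have "[Cd_form p q D d 1 0 x = 0] (mod l^k)"
    by (simp add: Cd_form_def cong_iff_dvd_diff power2_eq_square)
  moreover have "\<not> (l dvd 1 \<and> l dvd 0)" using assms(1) by auto
  ultimately show "\<exists>T Z W. \<not> (l dvd T \<and> l dvd Z) \<and> [Cd_form p q D d T Z W = 0] (mod l^k)" by blast
qed

lemma loc_from_sqrt_inv:
  fixes l d p q D T Z :: int
  assumes "prime l" "\<not> l dvd d" "\<not> (l dvd T \<and> l dvd Z)"
    and "\<forall>k. \<exists>x. [x^2 = d * (d^2*T^4 + 2*(p+q)*D*d*Z^2*T^2 + 4*D^2*Z^4)] (mod l^k)"
  shows "Cd_local_point l p q D d"
  unfolding Cd_local_point_def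
proof
  fix k
  define R where "R = d^2*T^4 + 2*(p+q)*D*d*Z^2*T^2 + 4*D^2*Z^4"
  obtain x where x: "[x^2 = d * R] (mod l^k)" using assms(4) unfolding R_def by blast
  have "coprime d l" using assms(1,2) prime_imp_coprime coprime_commute by blast
  then have "coprime d (l^k)" by simp
  then obtain e where e: "[d*e = 1] (mod l^k)" using cong_solve_coprime_int by blast
  have "[d*(x*e)^2 = (e^2*d) * x^2] (mod l^k)" by (simp add: power_mult_distrib algebra_simps)
  also have "[(e^2*d) * x^2 = (e^2*d) * (d*R)] (mod l^k)" using x by (intro cong_mult cong_refl)
  also have "(e^2*d) * (d*R) = (d*e)^2 * R" by (simp add: power2_eq_square algebra_simps)
  also have "[(d*e)^2 * R = 1^2 * R] (mod l^k)" using e by (intro cong_mult cong_pow cong_refl)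
  finally have "[d*(x*e)^2 = R] (mod l^k)" by simp
  then have "[Cd_form p q D d T Z (x*e) = 0] (mod l^k)"
    unfolding Cd_form_int R_def by (simp add: cong_iff_dvd_diff)
  then show "\<exists>T Z W. \<not> (l dvd T \<and> l dvd Z) \<and> [Cd_form p q D d T Z W = 0] (mod l^k)"
    using assms(3) by blast
qed

lemma real_point:
  fixes p q D d :: int
  assumes "d \<noteq> 0" "D > 0" "p + q > 2"
  shows "Cd_real_point p q D d"
proof (cases "d > 0")
  case True
  define W where "W = sqrt (of_int d)"
  have "W^2 = of_int d" unfolding W_def using True by simp
  then have "Cd_form (of_int p) (of_int q) (of_int D) (of_int d) (1::real) 0 W = 0"
    by (simp add: Cd_form_def power2_eq_square)
  then show ?thesis unfolding Cd_real_point_def by (intro exI[of _ 1] exI[of _ 0] exI[of _ W]) simp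
next
  case False
  then have dn: "d < 0" using assms(1) by simp
  define dd :: real where "dd = of_int d"
  define DD :: real where "DD = of_int D"
  define s :: real where "s = of_int (p+q)"
  have dd: "dd < 0" using dn unfolding dd_def by simp
  have DD: "DD > 0" using assms(2) unfolding DD_def by simp
  have s: "s > 2" using assms(3) unfolding s_def by simp
  define t where "t = - 2 * DD / dd"
  have t: "t > 0" unfolding t_def using dd DD by (simp add: divide_pos_neg)
  define T where "T = sqrt t"
  have T2: "T^2 = t" unfolding T_def using t by simp
  have dt: "dd * t = - 2 * DD" unfolding t_def using dd by simp
  define F where "F = dd^2*T^4 + 2*s*DD*dd*1^2*T^2 + 4*DD^2*1^4"
  have "F = (dd*t)^2 + 2*s*DD*(dd*t) + 4*DD^2"
    unfolding F_def using T2 by (simp add: power2_eq_square power4_eq_xxxx algebra_simps)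
  also have "\<dots> = 4*DD^2*(2 - s)" unfolding dt by (simp add: power2_eq_square algebra_simps)
  finally have F: "F < 0" using DD s by (simp add: mult_pos_neg)
  define W where "W = sqrt (F / dd)"
  have "F / dd > 0" using F dd by (simp add: divide_neg_neg)
  then have "W^2 = F / dd" unfolding W_def by simp
  then have "dd * W^2 = F" using dd by simp
  then have "Cd_form (of_int p) (of_int q) DD dd T 1 W = 0"
    unfolding Cd_form_def F_def s_def by (simp add: algebra_simps)
  then show ?thesis unfolding Cd_real_point_def dd_def DD_def by (intro exI[of _ T] exI[of _ 1] exI[of _ W]) simp
qed

lemma QR_from:
  fixes l d W A :: int
  assumes "prime l" "[d*W^2 = A^2] (mod l)" "\<not> l dvd A"
  shows "QuadRes l d"
proof -
  have "\<not> l dvd W"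
  proof
    assume "l dvd W"
    then have "l dvd d*W^2" by (simp add: power2_eq_square)
    then have "l dvd A^2" using assms(2) cong_dvd_iff by blast
    then have "l dvd A" using assms(1) prime_dvd_power by blast
    with assms(3) show False by simp
  qed
  then have "coprime W l" using assms(1) prime_imp_coprime coprime_commute by blast
  then obtain w where w: "[W*w = 1] (mod l)" using cong_solve_coprime_int by blast
  have "[(A*w)^2 = A^2 * w^2] (mod l)" by (simp add: power_mult_distrib)
  also have "[A^2 * w^2 = (d*W^2)*w^2] (mod l)" using assms(2) by (intro cong_mult cong_refl) (rule cong_sym)
  also have "(d*W^2)*w^2 = d*(W*w)^2" by (simp add: power_mult_distrib)
  also have "[d*(W*w)^2 = d*1^2] (mod l)" using w by (intro cong_mult cong_pow cong_refl)
  finally show ?thesis unfolding QuadRes_def by auto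
qed

lemma prime_not_dvd_mult:
  fixes l a b :: int
  assumes "prime l" "\<not> l dvd a" "\<not> l dvd b"
  shows "\<not> l dvd a*b"
  using assms prime_dvd_mult_iff by blast

lemma prime_not_dvd_pow:
  fixes l a :: int
  assumes "prime l" "\<not> l dvd a"
  shows "\<not> l dvd a^n"
  using assms prime_dvd_power by blast

lemma prime_dvd_cancel:
  fixes l d W :: int
  assumes "prime l" "\<not> l dvd d" "l dvd d * W^n"
  shows "l dvd W"
proof -
  from prime_dvd_multD[OF assms(1) assms(3)] assms(2) have "l dvd W^n" by blast
  then show ?thesis using prime_dvd_power[OF assms(1)] by blast
qed

lemma prime_not_dvd_2:
  fixes l :: int
  assumes "prime l" "odd l"
  shows "\<not> l dvd 2"
proof
  assume "l dvd 2"
  then have "l \<le> 2" using zdvd_imp_le by simp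
  moreover have "l \<ge> 2" using prime_ge_2_int[OF assms(1)] .
  ultimately have "l = 2" by simp
  with assms(2) show False by simp
qed

lemma dvd_pow_le_int: "(l::int) dvd l^(Suc n)" by simp

lemma obs_s:
  fixes l p q D1 d :: int
  assumes l: "prime l" "odd l" and nD1: "\<not> l dvd D1" and nd: "\<not> l dvd d"
    and loc: "Cd_local_point l p q (l*D1) d"
  shows "QuadRes l d"
proof -
  obtain T Z W where prim: "\<not> (l dvd T \<and> l dvd Z)"
    and c: "[Cd_form p q (l*D1) d T Z W = 0] (mod l^3)"
    using loc unfolding Cd_local_point_def by blast
  have n2: "\<not> l dvd 2" using prime_not_dvd_2[OF l] .
  have c1: "l dvd Cd_form p q (l*D1) d T Z W"
  proof -
    have "l^3 dvd Cd_form p q (l*D1) d T Z W" using c by (simp add: cong_0_iff)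
    moreover have "l dvd l^3" by (simp add: eval_nat_numeral)
    ultimately show ?thesis by (rule dvd_trans[rotated])
  qed
  show ?thesis
  proof (cases "l dvd T")
    case False
    have "d*W^2 - (d*T^2)^2 = Cd_form p q (l*D1) d T Z W + l*(D1*(2*(p+q)*d*Z^2*T^2 + 4*l*D1*Z^4))"
      unfolding Cd_form_int by (simp add: power2_eq_square power4_eq_xxxx algebra_simps)
    then have "l dvd d*W^2 - (d*T^2)^2" using c1 by simp
    then have "[d*W^2 = (d*T^2)^2] (mod l)" by (simp add: cong_iff_dvd_diff)
    moreover have "\<not> l dvd d*T^2" using prime_not_dvd_mult[OF l(1) nd prime_not_dvd_pow[OF l(1) False]] .
    ultimately show ?thesis using QR_from[OF l(1)] by blast
  next
    case True
    then obtain t where t: "T = l*t" by blast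
    have nZ: "\<not> l dvd Z" using prim True by blast
    define K where "K = d^2*l*t^4 + 2*(p+q)*D1*d*Z^2*t^2"
    have id1: "Cd_form p q (l*D1) d T Z W = d*W^2 - l^2*(4*D1^2*Z^4 + l*K)"
      unfolding Cd_form_int t K_def by (simp add: power2_eq_square power4_eq_xxxx algebra_simps)
    have e: "d*W^2 = Cd_form p q (l*D1) d T Z W + l*(l*(4*D1^2*Z^4 + l*K))"
      unfolding id1 by (simp add: power2_eq_square)
    have "l dvd d*W^2" unfolding e using c1 by (intro dvd_add) auto
    then have "l dvd W" using prime_dvd_cancel[OF l(1) nd] by blast
    then obtain w where w: "W = l*w" by blast
    have "l^2*(d*w^2 - 4*D1^2*Z^4) = Cd_form p q (l*D1) d T Z W + l^3*K"
      unfolding id1 unfolding w by (simp add: power2_eq_square algebra_simps eval_nat_numeral)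
    moreover have "l^3 dvd Cd_form p q (l*D1) d T Z W" using c by (simp add: cong_0_iff)
    ultimately have "l^3 dvd l^2*(d*w^2 - 4*D1^2*Z^4)" by simp
    then have "l^2*l dvd l^2*(d*w^2 - 4*D1^2*Z^4)" by (simp add: eval_nat_numeral algebra_simps)
    then have "l dvd d*w^2 - 4*D1^2*Z^4" using l(1) by (subst (asm) dvd_times_left_cancel_iff) auto
    then have "[d*w^2 = (2*D1*Z^2)^2] (mod l)" by (simp add: cong_iff_dvd_diff power_mult_distrib power2_eq_square power4_eq_xxxx algebra_simps)
    moreover have "\<not> l dvd 2*D1*Z^2"
      using prime_not_dvd_mult[OF l(1) prime_not_dvd_mult[OF l(1) n2 nD1] prime_not_dvd_pow[OF l(1) nZ]] .
    ultimately show ?thesis using QR_from[OF l(1)] by blast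
  qed
qed

lemma obs_pq:
  fixes l p q D d u :: int
  assumes l: "prime l" and u: "(p+q)^2 - 4 = l*u" "\<not> l dvd u" and nD: "\<not> l dvd D" and nd: "\<not> l dvd d"
    and loc: "Cd_local_point l p q D d"
  shows "QuadRes l d"
proof -
  obtain T Z W where prim: "\<not> (l dvd T \<and> l dvd Z)"
    and c: "[Cd_form p q D d T Z W = 0] (mod l^2)"
    using loc unfolding Cd_local_point_def by blast
  have c2: "l^2 dvd Cd_form p q D d T Z W" using c by (simp add: cong_0_iff)
  have c1: "l dvd Cd_form p q D d T Z W" proof -
    have "l dvd l^2" by (simp add: eval_nat_numeral)
    then show ?thesis using c2 by (rule dvd_trans)
  qed
  define X where "X = d*T^2 + (p+q)*D*Z^2"
  have id: "Cd_form p q D d T Z W = d*W^2 - X^2 + l*u*D^2*Z^4"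
  proof -
    have "Cd_form p q D d T Z W = d*W^2 - X^2 + ((p+q)^2 - 4)*D^2*Z^4"
      unfolding Cd_form_int X_def by (simp add: power2_eq_square power4_eq_xxxx algebra_simps)
    then show ?thesis using u(1) by simp
  qed
  show ?thesis
  proof (cases "l dvd X")
    case False
    have "d*W^2 - X^2 = Cd_form p q D d T Z W - l*(u*D^2*Z^4)" using id by simp
    then have "l dvd d*W^2 - X^2" using c1 by simp
    then have "[d*W^2 = X^2] (mod l)" by (simp add: cong_iff_dvd_diff)
    then show ?thesis using QR_from[OF l(1)] False by blast
  next
    case True
    have nZ: "\<not> l dvd Z"
    proof
      assume "l dvd Z"
      then have "l dvd (p+q)*D*Z^2" by (simp add: power2_eq_square)
      moreover have "d*T^2 = X - (p+q)*D*Z^2" unfolding X_def by simp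
      ultimately have "l dvd d*T^2" using True by simp
      then have "l dvd T" using prime_dvd_cancel[OF l nd, of T 2] by blast
      with prim \<open>l dvd Z\<close> show False by blast
    qed
    have "d*W^2 = Cd_form p q D d T Z W + X^2 - l*(u*D^2*Z^4)" using id by simp
    moreover have "l dvd X^2" using True by (simp add: power2_eq_square)
    ultimately have "l dvd d*W^2" using c1 by simp
    then have "l dvd W" using prime_dvd_cancel[OF l(1) nd] by blast
    then have "l^2 dvd d*W^2" by (simp add: power2_eq_square mult_dvd_mono)
    moreover have "l^2 dvd X^2" using True by (simp add: power2_eq_square mult_dvd_mono)
    moreover have "l*(u*D^2*Z^4) = Cd_form p q D d T Z W - d*W^2 + X^2" using id by simp
    ultimately have "l^2 dvd l*(u*D^2*Z^4)" using c2 by simp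
    then have "l*l dvd l*(u*D^2*Z^4)" by (simp add: power2_eq_square)
    then have "l dvd u*D^2*Z^4" using l(1) by (subst (asm) dvd_times_left_cancel_iff) auto
    moreover have "\<not> l dvd u*D^2*Z^4"
      using prime_not_dvd_mult[OF l(1) prime_not_dvd_mult[OF l(1) u(2) prime_not_dvd_pow[OF l(1) nD]] prime_not_dvd_pow[OF l(1) nZ]] .
    ultimately show ?thesis by simp
  qed
qed

lemma odd_sq8:
  fixes x :: int
  assumes "odd x"
  shows "8 dvd x^2 - 1"
proof -
  obtain k where k: "x = 2*k + 1" using assms by (meson oddE)
  have "even (k*(k+1))" by simp
  then obtain j where j: "k*(k+1) = 2*j" by blast
  have "x^2 - 1 = 4*(k*(k+1))" unfolding k by (simp add: power2_eq_square algebra_simps)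
  also have "\<dots> = 8*j" using j by simp
  finally show ?thesis by simp
qed

lemma odd_4th16:
  fixes x :: int
  assumes "odd x"
  shows "16 dvd x^4 - 1"
proof -
  obtain j where j: "x^2 - 1 = 8*j" using odd_sq8[OF assms] by blast
  have "x^4 - 1 = (x^2 - 1)*(x^2 + 1)" by (simp add: power2_eq_square power4_eq_xxxx algebra_simps)
  also have "\<dots> = 8*j*(8*j + 2)" using j by (simp add: algebra_simps)
  also have "\<dots> = 16*(j*(4*j+1))" by (simp add: algebra_simps)
  finally show ?thesis by simp
qed

lemma dvd_chain:
  fixes n a b c :: int
  assumes "n dvd a - b" "n dvd b - c"
  shows "n dvd a - c"
proof -
  have "a - c = (a - b) + (b - c)" by simp
  then show ?thesis using assms by (metis dvd_add)
qed

lemma get_loc: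
  assumes "Cd_local_point l p q D d"
  obtains T Z W where "\<not> (l dvd T \<and> l dvd Z)" "l^k dvd Cd_form p q D d T Z W"
  using assms unfolding Cd_local_point_def cong_0_iff by blast

lemma obs_2:
  fixes p q D d :: int
  assumes od: "odd d" and oD: "odd D" and pq: "4 dvd p + q" and loc: "Cd_local_point 2 p q D d"
  shows "d mod 4 = 1"
proof -
  obtain T Z W where prim: "\<not> (2 dvd T \<and> 2 dvd Z)" and c: "2^4 dvd Cd_form p q D d T Z W"
    using get_loc[OF loc] by blast
  obtain m where m: "p + q = 4*m" using pq by blast
  define F where "F = d^2*T^4 + 2*(p+q)*D*d*Z^2*T^2 + 4*D^2*Z^4"
  have c16: "16 dvd d*W^2 - F" using c unfolding Cd_form_int F_def by simp
  show ?thesis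
  proof (cases "even T")
    case False
    have "8 dvd (d*T^2)^2 - 1" using odd_sq8 False od by simp
    then obtain j where j8: "(d*T^2)^2 - 1 = 8*j" by blast
    have "F - 1 = ((d*T^2)^2 - 1) + 8*(m*D*d*Z^2*T^2) + 4*(D^2*Z^4)"
      unfolding F_def m by (simp add: power2_eq_square power4_eq_xxxx algebra_simps)
    then have "F - 1 = 4*(2*j + 2*(m*D*d*Z^2*T^2) + D^2*Z^4)" using j8 by simp
    then have "4 dvd F - 1" by simp
    moreover have "4 dvd d*W^2 - F" using c16 by (rule dvd_trans[rotated]) simp
    ultimately have d1: "4 dvd d*W^2 - 1" using dvd_chain by blast
    have "odd W"
    proof
      assume "even W"
      then have "4 dvd d*W^2" by (auto simp: power2_eq_square)
      with d1 have "4 dvd d*W^2 - (d*W^2 - 1)" using dvd_diff by blast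
      then have "4 dvd (1::int)" by simp
      then show False by simp
    qed
    then have "8 dvd W^2 - 1" by (rule odd_sq8)
    then obtain i where "W^2 - 1 = 8*i" by blast
    then have "d*(W^2 - 1) = 4*(2*d*i)" by simp
    then have "4 dvd d*(W^2 - 1)" by (rule dvdI)
    then have "4 dvd d*W^2 - d" by (simp add: algebra_simps)
    with d1 have "4 dvd (d*W^2 - 1) - (d*W^2 - d)" using dvd_diff by blast
    then have "4 dvd d - 1" by simp
    then show ?thesis by presburger
  next
    case True
    then obtain t where t: "T = 2*t" by blast
    have oZ: "odd Z" using prim True by blast
    have "8 dvd (D*Z^2)^2 - 1" using odd_sq8 oZ oD by simp
    then obtain j where j: "(D*Z^2)^2 - 1 = 8*j" by blast
    have "F - 4 = 16*(d^2*t^4) + 32*(m*D*d*Z^2*t^2) + 4*((D*Z^2)^2 - 1)"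
      unfolding F_def m t by (simp add: power2_eq_square power4_eq_xxxx algebra_simps)
    also have "\<dots> = 16*(d^2*t^4 + 2*(m*D*d*Z^2*t^2) + 2*j)" unfolding j by (simp add: algebra_simps)
    finally have "16 dvd F - 4" by simp
    with c16 have d4: "16 dvd d*W^2 - 4" using dvd_chain by blast
    have "even W"
    proof (rule ccontr)
      assume "odd W"
      then have "odd (d*W^2 - 4)" using od by simp
      moreover have "even (d*W^2 - 4)" using d4 by (rule dvd_trans[rotated]) simp
      ultimately show False by simp
    qed
    then obtain w where w: "W = 2*w" by blast
    have "d*W^2 - 4 = 4*(d*w^2 - 1)" unfolding w by (simp add: power2_eq_square algebra_simps)
    with d4 have "4*4 dvd 4*(d*w^2 - 1)" by simp
    then have dw: "4 dvd d*w^2 - 1" by (subst (asm) dvd_times_left_cancel_iff) auto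
    have "odd w"
    proof
      assume "even w"
      have "even (d*w^2 - 1)" using dw by (rule dvd_trans[rotated]) simp
      then show False using \<open>even w\<close> by (simp add: power2_eq_square)
    qed
    then have "8 dvd w^2 - 1" by (rule odd_sq8)
    then obtain i where "w^2 - 1 = 8*i" by blast
    then have "d*(w^2 - 1) = 4*(2*d*i)" by simp
    then have "4 dvd d*(w^2 - 1)" by (rule dvdI)
    then have "4 dvd d*w^2 - d" by (simp add: algebra_simps)
    with dw have "4 dvd (d*w^2 - 1) - (d*w^2 - d)" using dvd_diff by blast
    then have "4 dvd d - 1" by simp
    then show ?thesis by presburger
  qed
qed

lemma odd_pow4_parity:
  fixes T Z D p q :: int
  assumes "\<not> (odd T \<and> odd Z)" "\<not> (even T \<and> even Z)" "odd D" "even (p+q)"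
  shows "odd (T^4 + (p+q)*D*Z^2*T^2 + D^2*Z^4)" "odd (T^4 - (p+q)*D*Z^2*T^2 + D^2*Z^4)"
  using assms by auto

lemma both_odd_16:
  fixes T Z D s :: int
  assumes "odd T" "odd Z" "even s"
  shows "16 dvd (T^4 + s*D*Z^2*T^2 + D^2*Z^4) - (1 + s*D + D^2)"
proof -
  have a: "16 dvd T^4 - 1" using odd_4th16 assms by simp
  have b: "16 dvd Z^4 - 1" using odd_4th16 assms by simp
  have "8 dvd (T*Z)^2 - 1" using odd_sq8 assms by simp
  then obtain j where j: "(T*Z)^2 - 1 = 8*j" by blast
  obtain s' where s: "s = 2*s'" using assms by blast
  have "(T^4 + s*D*Z^2*T^2 + D^2*Z^4) - (1 + s*D + D^2) = (T^4 - 1) + s*D*((T*Z)^2 - 1) + D^2*(Z^4 - 1)"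
    by (simp add: power2_eq_square power4_eq_xxxx algebra_simps)
  also have "\<dots> = (T^4 - 1) + 16*(s'*D*j) + D^2*(Z^4 - 1)" unfolding j s by simp
  finally have e: "(T^4 + s*D*Z^2*T^2 + D^2*Z^4) - (1 + s*D + D^2) = (T^4 - 1) + 16*(s'*D*j) + D^2*(Z^4 - 1)" .
  have "16 dvd (T^4 - 1) + 16*(s'*D*j) + D^2*(Z^4 - 1)"
    using a b by (intro dvd_add) auto
  then show ?thesis unfolding e .
qed

lemma both_odd_16':
  fixes T Z D s :: int
  assumes "odd T" "odd Z" "even s"
  shows "16 dvd (T^4 - s*D*Z^2*T^2 + D^2*Z^4) - (1 - s*D + D^2)"
  using both_odd_16[OF assms(1,2), of "-s" D] assms(3) by simp

lemma cancel_mult_dvd: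
  fixes a n x :: int
  assumes "a*n dvd a*x" "a \<noteq> 0"
  shows "n dvd x"
  using assms by simp

lemma obs_2A:
  fixes p q D :: int
  assumes pq: "q = p + 2" and op: "odd p" and oD: "odd D" and D16: "16 dvd D^2 - 1"
    and loc: "Cd_local_point 2 p q D 2"
  shows "p mod 8 = 7"
proof -
  obtain T Z W where prim: "\<not> (2 dvd T \<and> 2 dvd Z)" and c: "2^6 dvd Cd_form p q D 2 T Z W"
    using get_loc[OF loc] by blast
  define H where "H = T^4 + (p+q)*D*Z^2*T^2 + D^2*Z^4"
  have cf: "Cd_form p q D 2 T Z W = 2*(W^2 - 2*H)"
    unfolding Cd_form_int H_def by (simp add: algebra_simps)
  have "2*32 dvd 2*(W^2 - 2*H)" using c cf by simp
  then have c32: "32 dvd W^2 - 2*H" by (rule cancel_mult_dvd) simp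
  have "even (W^2 - 2*H)" using c32 by (rule dvd_trans[rotated]) simp
  then have "even W" by simp
  then obtain V where V: "W = 2*V" by blast
  have "W^2 - 2*H = 2*(2*V^2 - H)" unfolding V by (simp add: power2_eq_square)
  with c32 have "2*16 dvd 2*(2*V^2 - H)" by simp
  then have c16: "16 dvd 2*V^2 - H" by (rule cancel_mult_dvd) simp
  have epq: "even (p+q)" using pq op by simp
  have oT: "odd T \<and> odd Z"
  proof (rule ccontr)
    assume a: "\<not> (odd T \<and> odd Z)"
    have "odd H" unfolding H_def using odd_pow4_parity(1)[OF a _ oD epq] prim by blast
    moreover have "even (2*V^2 - H)" using c16 by (rule dvd_trans[rotated]) simp
    ultimately show False by simp
  qed
  have "16 dvd H - (1 + (p+q)*D + D^2)" unfolding H_def using both_odd_16 oT epq by blast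
  with c16 have "16 dvd 2*V^2 - (1 + (p+q)*D + D^2)" by (rule dvd_chain)
  then have "16 dvd (2*V^2 - (1 + (p+q)*D + D^2)) + (D^2 - 1)" using D16 by (rule dvd_add)
  then have e1: "16 dvd 2*V^2 - 2 - (p+q)*D" by (simp add: algebra_simps)
  have "even (p+1)" using op by simp
  then obtain m where m: "p + 1 = 2*m" by blast
  have pqm: "p + q = 4*m" using pq m by simp
  have "4 dvd 2*V^2 - 2 - (p+q)*D" using e1 by (rule dvd_trans[rotated]) simp
  then have "4 dvd (2*V^2 - 2 - (p+q)*D) + 4*(m*D)" by (rule dvd_add) simp
  then have "2*2 dvd 2*(V^2 - 1)" unfolding pqm by (simp add: algebra_simps)
  then have "2 dvd V^2 - 1" by (rule cancel_mult_dvd) simp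
  then have "odd V" by simp
  then have "8 dvd V^2 - 1" by (rule odd_sq8)
  then obtain j where "V^2 - 1 = 8*j" by blast
  then have "2*(V^2 - 1) = 16*j" by simp
  then have "16 dvd 2*(V^2 - 1)" by (rule dvdI)
  then have "16 dvd (2*(V^2 - 1)) - (2*V^2 - 2 - (p+q)*D)" using e1 by (rule dvd_diff)
  then have "2*8 dvd 2*((p+1)*D)" using pq by (simp add: algebra_simps)
  then have "8 dvd (p+1)*D" by (rule cancel_mult_dvd) simp
  then have d8: "8 dvd (p+1)*D*D" by simp
  obtain k where k: "D^2 - 1 = 16*k" using D16 by blast
  have DD: "D*D = 1 + 16*k" using k by (simp add: power2_eq_square)
  have "(p+1)*D*D = (p+1)*(D*D)" by simp
  also have "\<dots> = (p+1) + 8*(2*(p+1)*k)" unfolding DD by (simp add: algebra_simps)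
  finally have "(p+1)*D*D = (p+1) + 8*(2*(p+1)*k)" .
  with d8 have "8 dvd (p+1) + 8*(2*(p+1)*k)" by simp
  then have "8 dvd p + 1" by (simp add: dvd_add_left_iff)
  then show ?thesis by presburger
qed

lemma mod8_1: "(1 + 8*x) mod 8 = (1::int)"
  by simp

lemma obs_2B:
  fixes p q D :: int
  assumes pq: "q = p + 2" and op: "odd p" and D8: "D mod 8 = 1 \<or> D mod 8 = 3"
    and loc: "Cd_local_point 2 p q D (-2)"
  shows "p mod 8 = 1"
proof -
  have oD: "odd D" using D8 by presburger
  obtain T Z W where prim: "\<not> (2 dvd T \<and> 2 dvd Z)" and c: "2^6 dvd Cd_form p q D (-2) T Z W"
    using get_loc[OF loc] by blast
  define H where "H = T^4 - (p+q)*D*Z^2*T^2 + D^2*Z^4"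
  have cf: "Cd_form p q D (-2) T Z W = 2*(-(W^2 + 2*H))"
    unfolding Cd_form_int H_def by (simp add: algebra_simps)
  have "2*32 dvd 2*(-(W^2 + 2*H))" using c cf by simp
  then have "32 dvd -(W^2 + 2*H)" by (rule cancel_mult_dvd) simp
  then have c32: "32 dvd W^2 + 2*H" by (simp only: dvd_minus_iff)
  have "even (W^2 + 2*H)" using c32 by (rule dvd_trans[rotated]) simp
  then have "even W" by simp
  then obtain V where V: "W = 2*V" by blast
  have "W^2 + 2*H = 2*(2*V^2 + H)" unfolding V by (simp add: power2_eq_square)
  with c32 have "2*16 dvd 2*(2*V^2 + H)" by simp
  then have c16: "16 dvd 2*V^2 + H" by (rule cancel_mult_dvd) simp
  have epq: "even (p+q)" using pq op by simp
  have oT: "odd T \<and> odd Z"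
  proof (rule ccontr)
    assume a: "\<not> (odd T \<and> odd Z)"
    have "odd H" unfolding H_def using odd_pow4_parity(2)[OF a _ oD epq] prim by blast
    moreover have "even (2*V^2 + H)" using c16 by (rule dvd_trans[rotated]) simp
    ultimately show False by simp
  qed
  have "16 dvd H - (1 - (p+q)*D + D^2)" unfolding H_def using both_odd_16' oT epq by blast
  with c16 have "16 dvd (2*V^2 + H) - (H - (1 - (p+q)*D + D^2))" by (rule dvd_diff)
  then have e1: "16 dvd 2*V^2 + 1 - (p+q)*D + D^2" by (simp add: algebra_simps)
  have "even (p+1)" using op by simp
  then obtain m where m: "p + 1 = 2*m" by blast
  have pqm: "p + q = 4*m" using pq m by simp
  obtain k where k: "D^2 - 1 = 8*k" using odd_sq8[OF oD] by blast
  have "4 dvd 2*V^2 + 1 - (p+q)*D + D^2" using e1 by (rule dvd_trans[rotated]) simp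
  then have "4 dvd (2*V^2 + 1 - (p+q)*D + D^2) + (4*(m*D) - 4*(2*k))" by (rule dvd_add) simp
  then have "2*2 dvd 2*(V^2 + 1)" unfolding pqm using k by (simp add: algebra_simps)
  then have "2 dvd V^2 + 1" by (rule cancel_mult_dvd) simp
  then have "odd V" by simp
  then have "8 dvd V^2 - 1" by (rule odd_sq8)
  then obtain j where "V^2 - 1 = 8*j" by blast
  then have "2*V^2 - 2 = 16*j" by simp
  then have "16 dvd 2*V^2 - 2" by (rule dvdI)
  with e1 have "16 dvd (2*V^2 + 1 - (p+q)*D + D^2) - (2*V^2 - 2)" by (rule dvd_diff)
  then have e2: "16 dvd 3 - (p+q)*D + D^2" by (simp add: algebra_simps)
  show ?thesis
  proof (cases "D mod 8 = 1")
    case True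
    then obtain b where b: "D = 8*b + 1" by (metis mult.commute div_mod_decomp_int add.commute)
    have "3 - (p+q)*D + D^2 = (2 - 2*p) + 16*(4*b^2 - p*b)"
      unfolding b pq by (simp add: power2_eq_square algebra_simps)
    with e2 have "16 dvd (2 - 2*p) + 16*(4*b^2 - p*b)" by simp
    then have "16 dvd 2 - 2*p" by (simp add: dvd_add_left_iff)
    then show ?thesis by presburger
  next
    case False
    then have "D mod 8 = 3" using D8 by simp
    then obtain b where b: "D = 8*b + 3" by (metis mult.commute div_mod_decomp_int add.commute)
    have "3 - (p+q)*D + D^2 = (6 - 6*p) + 16*(2*b - p*b + 4*b^2)"
      unfolding b pq by (simp add: power2_eq_square algebra_simps)
    with e2 have "16 dvd (6 - 6*p) + 16*(2*b - p*b + 4*b^2)" by simp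
    then have "16 dvd 6 - 6*p" by (simp add: dvd_add_left_iff)
    then show ?thesis by presburger
  qed
qed

lemma ex_2A:
  fixes p q D :: int
  assumes pq: "q = p + 2" and p7: "p mod 8 = 7" and D16: "16 dvd D^2 - 1"
  shows "Cd_local_point 2 p q D 2"
  unfolding Cd_local_point_def
proof
  fix n
  obtain a where a: "p = 8*a + 7" using p7 by (metis mult.commute div_mod_decomp_int add.commute)
  obtain k where k: "D^2 - 1 = 16*k" using D16 by blast
  define c where "c = 1 + 8*((a+1)*D + k)"
  have c8: "c mod 8 = 1" unfolding c_def by (rule mod8_1)
  obtain V where V: "[V^2 = c] (mod 2^n)" using hensel_two[OF c8] by blast
  have "Cd_form p q D 2 1 1 (2*V) = 8*(V^2 - c)"
  proof -
    have "D^2 = 1 + 16*k" using k by simp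
    then show ?thesis unfolding Cd_form_int c_def pq a by (simp add: algebra_simps)
  qed
  moreover have "2^n dvd 8*(V^2 - c)" using V unfolding cong_iff_dvd_diff by (rule dvd_mult)
  ultimately have "[Cd_form p q D 2 1 1 (2*V) = 0] (mod 2^n)" by (simp add: cong_0_iff)
  then show "\<exists>T Z W. \<not> (2 dvd T \<and> 2 dvd Z) \<and> [Cd_form p q D 2 T Z W = 0] (mod 2^n)"
    by (intro exI[of _ 1] exI[of _ 1] exI[of _ "2*V"]) simp
qed

lemma ex_2B:
  fixes p q D :: int
  assumes pq: "q = p + 2" and p1: "p mod 8 = 1" and D8: "D mod 8 = 1 \<or> D mod 8 = 3"
  shows "Cd_local_point 2 p q D (-2)"
  unfolding Cd_local_point_def
proof
  fix n
  obtain a where a: "p = 8*a + 1" using p1 by (metis mult.commute div_mod_decomp_int add.commute)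
  obtain c where cD: "2*c = (p+q)*D - 1 - D^2" and c8: "c mod 8 = 1"
  proof (cases "D mod 8 = 1")
    case True
    then obtain b where b: "D = 8*b + 1" by (metis mult.commute div_mod_decomp_int add.commute)
    show ?thesis
      by (rule that[of "1 + 8*(a + b + 8*a*b - 4*b^2)"])
         (simp add: b pq a power2_eq_square algebra_simps, rule mod8_1)
  next
    case False
    then have "D mod 8 = 3" using D8 by simp
    then obtain b where b: "D = 8*b + 3" by (metis mult.commute div_mod_decomp_int add.commute)
    show ?thesis
      by (rule that[of "1 + 8*(3*a - b + 8*a*b - 4*b^2)"])
         (simp add: b pq a power2_eq_square algebra_simps, rule mod8_1)
  qed
  obtain V where V: "[V^2 = c] (mod 2^n)" using hensel_two[OF c8] by blast
  have "Cd_form p q D (-2) 1 1 (2*V) = -8*V^2 - 4 + 4*(p+q)*D - 4*D^2"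
    unfolding Cd_form_int by (simp add: algebra_simps)
  also have "\<dots> = -8*V^2 + 4*(2*c)" unfolding cD by (simp add: algebra_simps)
  also have "\<dots> = (-8)*(V^2 - c)" by (simp add: algebra_simps)
  finally have e: "Cd_form p q D (-2) 1 1 (2*V) = (-8)*(V^2 - c)" .
  have "2^n dvd (-8)*(V^2 - c)" using V unfolding cong_iff_dvd_diff by (rule dvd_mult)
  then have "[Cd_form p q D (-2) 1 1 (2*V) = 0] (mod 2^n)" unfolding e by (simp add: cong_0_iff)
  then show "\<exists>T Z W. \<not> (2 dvd T \<and> 2 dvd Z) \<and> [Cd_form p q D (-2) T Z W = 0] (mod 2^n)"
    by (intro exI[of _ 1] exI[of _ 1] exI[of _ "2*V"]) simp
qed

lemma ex_2d:
  fixes p q D d :: int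
  assumes d4: "d mod 4 = 1" and oD: "odd D" and pq: "4 dvd p + q"
  shows "Cd_local_point 2 p q D d"
proof (cases "d mod 8 = 1")
  case True
  show ?thesis by (rule loc_from_sqrt) (use hensel_two[OF True] in auto)
next
  case False
  then have "d mod 8 = 5" using d4 by presburger
  then obtain a where a: "d = 8*a + 5" by (metis mult.commute div_mod_decomp_int add.commute)
  obtain m where m: "p + q = 4*m" using pq by blast
  obtain k where k: "D^2 - 1 = 8*k" using odd_sq8[OF oD] by blast
  define c where "c = d * (d^2*1^4 + 2*(p+q)*D*d*1^2*1^2 + 4*D^2*1^4)"
  have "c = d^3 + 8*(m*D*d^2) + 4*d*D^2" unfolding c_def m by (simp add: power2_eq_square power3_eq_cube algebra_simps)
  also have "\<dots> = 1 + 8*(64*a^3 + 120*a^2 + 79*a + 18 + m*D*d^2 + 4*d*k)"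
  proof -
    have "D^2 = 1 + 8*k" using k by simp
    then show ?thesis unfolding a by (simp add: power2_eq_square power3_eq_cube algebra_simps)
  qed
  finally have c8: "c mod 8 = 1" by (simp only: mod8_1)
  have nd: "\<not> 2 dvd d" using a by presburger
  show ?thesis
    by (rule loc_from_sqrt_inv[of 2 d 1 1]) (use nd hensel_two[OF c8] in \<open>auto simp: c_def\<close>)
qed

lemma ex_r:
  fixes r p q D1 e :: int
  assumes r: "prime r" "odd r" and e: "e = 1 \<or> e = -1" and pq: "q = p + 2"
    and qp: "QuadRes r p" "\<not> r dvd p" and qq: "QuadRes r q" "\<not> r dvd q"
    and qd: "QuadRes r (-e*D1)" "\<not> r dvd D1"
  shows "Cd_local_point r p q (r*D1) (e*r)"
  unfolding Cd_local_point_def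
proof
  fix n
  have e2: "e*e = 1" using e by auto
  have nd: "\<not> r dvd (-e*D1)" using e qd(2) by auto
  obtain a where a: "[a^2 = p] (mod r^n)" using hensel_odd[OF r qp(2) qp(1)] by blast
  obtain b where b: "[b^2 = q] (mod r^n)" using hensel_odd[OF r qq(2) qq(1)] by blast
  obtain c where c: "[c^2 = -e*D1] (mod r^n)" using hensel_odd[OF r nd qd(1)] by blast
  have c': "[D1 = -e*c^2] (mod r^n)"
  proof -
    have "[-e*c^2 = -e*(-e*D1)] (mod r^n)" using c by (intro cong_mult cong_refl)
    also have "-e*(-e*D1) = D1" using e2 by (simp add: algebra_simps)
    finally show ?thesis by (rule cong_sym)
  qed
  define T where "T = c*(a-b)"
  define E where "E = T^4 + 2*e*(p+q)*D1*T^2 + (q-p)^2*D1^2"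
  have "[E = T^4 + 2*e*(a^2+b^2)*(-e*c^2)*T^2 + (b^2-a^2)^2*(-e*c^2)^2] (mod r^n)"
    unfolding E_def
    by (intro cong_add cong_mult cong_pow cong_diff cong_refl c' cong_sym[OF a] cong_sym[OF b])
  also have "T^4 + 2*e*(a^2+b^2)*(-e*c^2)*T^2 + (b^2-a^2)^2*(-e*c^2)^2 = 0"
    using e unfolding T_def by (auto simp: power2_eq_square power4_eq_xxxx algebra_simps)
  finally have E0: "[E = 0] (mod r^n)" .
  have "Cd_form p q (r*D1) (e*r) T 1 0 = (-(r^2)) * E"
  proof -
    have "Cd_form p q (r*D1) (e*r) T 1 0 = -(e^2*r^2*T^4 + 2*(p+q)*(r*D1)*(e*r)*T^2 + 4*(r*D1)^2)"
      unfolding Cd_form_int by (simp add: power_mult_distrib)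
    also have "\<dots> = (-(r^2)) * E" unfolding E_def pq using e
      by (auto simp: power2_eq_square algebra_simps)
    finally show ?thesis .
  qed
  moreover have "[(-(r^2)) * E = (-(r^2)) * 0] (mod r^n)" using E0 by (intro cong_mult cong_refl)
  ultimately have "[Cd_form p q (r*D1) (e*r) T 1 0 = 0] (mod r^n)" by simp
  moreover have "\<not> (r dvd T \<and> r dvd 1)" using r by auto
  ultimately show "\<exists>T Z W. \<not> (r dvd T \<and> r dvd Z) \<and> [Cd_form p q (r*D1) (e*r) T Z W = 0] (mod r^n)"
    by blast
qed

lemma prod_remove1:
  fixes xs :: "int list"
  assumes "x \<in> set xs"
  shows "prod_list xs = x * prod_list (remove1 x xs)"
  using assms by (induction xs) (auto simp: algebra_simps)

lemma prime_not_dvd_prod: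
  fixes l :: int
  assumes "prime l" "\<forall>y \<in> set xs. prime y \<and> y \<noteq> l"
  shows "\<not> l dvd prod_list xs"
  using assms(2)
proof (induction xs)
  case Nil then show ?case using assms(1) by auto
next
  case (Cons y ys)
  have "\<not> l dvd y"
  proof
    assume "l dvd y"
    then have "l = y" using primes_dvd_imp_eq assms(1) Cons.prems by auto
    then show False using Cons.prems by auto
  qed
  moreover have "\<not> l dvd prod_list ys" using Cons by auto
  ultimately show ?case using prime_not_dvd_mult[OF assms(1)] by simp
qed

lemma prod_pos:
  fixes xs :: "int list"
  assumes "\<forall>y \<in> set xs. prime y"
  shows "prod_list xs > 0"
  using assms by (induction xs) (auto simp: prime_gt_0_int)

lemma leg_prod:
  fixes l :: int
  assumes "prime l" "l > 2" "\<forall>y \<in> set xs. Legendre y l = 1"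
  shows "Legendre (prod_list xs) l = 1"
  using assms(3)
proof (induction xs)
  case Nil
  have "\<not> [1 = 0] (mod l)" using assms by (auto simp: cong_0_iff)
  moreover have "QuadRes l 1" unfolding QuadRes_def by (intro exI[of _ 1]) simp
  ultimately show ?case by (simp add: Legendre_def)
next
  case (Cons y ys)
  then show ?case using leg_mult[OF assms(1,2)] by simp
qed

lemma prod_mod8_17:
  fixes xs :: "int list"
  assumes "\<forall>y \<in> set xs. y mod 8 = 1 \<or> y mod 8 = 7"
  shows "prod_list xs mod 8 = 1 \<or> prod_list xs mod 8 = 7"
  using assms
proof (induction xs)
  case Nil then show ?case by simp
next
  case (Cons y ys)
  then have a: "y mod 8 = 1 \<or> y mod 8 = 7" and b: "prod_list ys mod 8 = 1 \<or> prod_list ys mod 8 = 7" by auto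
  have "(y * prod_list ys) mod 8 = ((y mod 8) * (prod_list ys mod 8)) mod 8" by (simp add: mod_mult_eq)
  then show ?case using a b by auto
qed

lemma prod_mod8_13:
  fixes xs :: "int list"
  assumes "\<forall>y \<in> set xs. y mod 8 = 1 \<or> y mod 8 = 3"
  shows "prod_list xs mod 8 = 1 \<or> prod_list xs mod 8 = 3"
  using assms
proof (induction xs)
  case Nil then show ?case by simp
next
  case (Cons y ys)
  then have a: "y mod 8 = 1 \<or> y mod 8 = 3" and b: "prod_list ys mod 8 = 1 \<or> prod_list ys mod 8 = 3" by auto
  have "(y * prod_list ys) mod 8 = ((y mod 8) * (prod_list ys mod 8)) mod 8" by (simp add: mod_mult_eq)
  then show ?case using a b by auto
qed

lemma sq16:
  fixes D :: int
  assumes "D mod 8 = 1 \<or> D mod 8 = 7"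
  shows "16 dvd D^2 - 1"
proof -
  have "D = 8*(D div 8) + 1 \<or> D = 8*(D div 8 + 1) - 1" using assms by presburger
  then obtain b where b: "D = 8*b + 1 \<or> D = 8*b - 1" by blast
  then show ?thesis
  proof
    assume h: "D = 8*b + 1"
    have "D^2 - 1 = 16*(4*b^2 + b)" unfolding h by (simp add: power2_eq_square algebra_simps)
    then show ?thesis by (rule dvdI)
  next
    assume h: "D = 8*b - 1"
    have "D^2 - 1 = 16*(4*b^2 - b)" unfolding h by (simp add: power2_eq_square algebra_simps)
    then show ?thesis by (rule dvdI)
  qed
qed

lemma leg_QR:
  fixes l a :: int
  assumes "\<not> l dvd a"
  shows "Legendre a l = 1 \<longleftrightarrow> QuadRes l a"
  using assms by (simp add: Legendre_def cong_0_iff)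

lemma loc_leg:
  fixes l d p q D :: int
  assumes "prime l" "odd l" "Legendre d l = 1"
  shows "Cd_local_point l p q D d"
proof -
  have nd: "\<not> l dvd d" using assms(3) by (auto simp: Legendre_def cong_0_iff)
  then have "QuadRes l d" using assms(3) leg_QR by blast
  then show ?thesis using loc_from_sqrt[OF assms(1)] hensel_odd[OF assms(1,2) nd] by blast
qed

lemma leg_neg2:
  fixes p :: int
  assumes "prime p" "p > 2"
  shows "Legendre (-2) p = (if p mod 8 = 1 \<or> p mod 8 = 3 then 1 else -1)"
proof -
  have "Legendre (-2) p = Legendre (-1) p * Legendre 2 p" using leg_mult[OF assms, of "-1" 2] by simp
  moreover have "odd p" using assms prime_odd_int by auto
  ultimately show ?thesis using leg_neg1[OF assms] leg_two[OF assms]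
    by (cases "p mod 8 = 1"; cases "p mod 8 = 3"; cases "p mod 8 = 5"; cases "p mod 8 = 7"; simp; presburger)
qed

lemma prime_odd_gt2:
  fixes l :: int
  assumes "prime l" "odd l"
  shows "l > 2"
proof -
  have "l \<ge> 2" using prime_ge_2_int[OF assms(1)] .
  moreover have "l \<noteq> 2" using assms(2) by auto
  ultimately show ?thesis by simp
qed

lemma leg_pm1:
  fixes a p :: int
  assumes "\<not> p dvd a"
  shows "Legendre a p = 1 \<or> Legendre a p = -1"
  using assms by (auto simp: Legendre_def cong_0_iff)

lemma recip_d:
  fixes r s e :: int
  assumes r: "prime r" "odd r" and s: "prime s" "odd s" and rs: "r \<noteq> s"
    and e: "e = 1 \<or> e = -1" and d4: "(e*r) mod 4 = 1"
  shows "Legendre (e*r) s = Legendre s r"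
proof -
  have r2: "r > 2" and s2: "s > 2" using prime_odd_gt2 r s by auto
  have nsr: "\<not> s dvd r" using primes_dvd_imp_eq[OF s(1) r(1)] rs by auto
  have nrs: "\<not> r dvd s" using primes_dvd_imp_eq[OF r(1) s(1)] rs by auto
  have A: "Legendre r s = 1 \<or> Legendre r s = -1" using leg_pm1[OF nsr] .
  have B: "Legendre s r = 1 \<or> Legendre s r = -1" using leg_pm1[OF nrs] .
  have QR: "Legendre r s * Legendre s r = (-1::int) ^ (nat ((r - 1) div 2 * ((s - 1) div 2)))"
    using Quadratic_Reciprocity_int[of r s] r s r2 s2 rs by simp
  have ev: "even (nat ((r - 1) div 2 * ((s - 1) div 2))) \<longleftrightarrow> even ((r - 1) div 2) \<or> even ((s - 1) div 2)"
    using r2 s2 by (subst even_nat_iff) auto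
  show ?thesis
  proof (cases "e = 1")
    case True
    then have "r mod 4 = 1" using d4 by simp
    then have "even ((r - 1) div 2)" by presburger
    then have "Legendre r s * Legendre s r = 1" using QR ev by simp
    then show ?thesis using A B True by auto
  next
    case False
    then have e1: "e = -1" using e by simp
    then have "r mod 4 = 3" using d4 by presburger
    then have "odd ((r - 1) div 2)" by presburger
    have "Legendre r s * Legendre s r = (if s mod 4 = 1 then 1 else -1)"
    proof (cases "s mod 4 = 1")
      case True
      then have "even ((s - 1) div 2)" by presburger
      then show ?thesis using QR ev True by simp
    next
      case False
      then have "odd ((s - 1) div 2)" using s(2) by presburger
      then show ?thesis using QR ev False \<open>odd ((r - 1) div 2)\<close> by simp
    qed
    moreover have "Legendre (e*r) s = Legendre (-1) s * Legendre r s" using leg_mult[OF s(1) s2, of "-1" r] e1 by simp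
    ultimately show ?thesis using A B leg_neg1[OF s(1) s2] by (cases "s mod 4 = 1") auto
  qed
qed

lemma qs2_prime:
  fixes x p q :: int
  assumes "prime x" "x \<in> finite_S p q Ds"
  shows "x \<in> QS2 p q Ds" "-x \<in> QS2 p q Ds"
proof -
  have sq: "squarefree x" using squarefree_prime[OF assms(1)] .
  have dv: "\<And>l. prime l \<Longrightarrow> l dvd x \<Longrightarrow> l \<in> finite_S p q Ds"
    using primes_dvd_imp_eq assms by blast
  have "x \<noteq> 0" using assms(1) by auto
  then show "x \<in> QS2 p q Ds" "-x \<in> QS2 p q Ds" unfolding QS2_def using sq dv by auto
qed

lemma selmer_iff:
  fixes p q d :: int
  assumes "d \<in> QS2 p q Ds" "p + q > 2" "prod_list Ds > 0"
  shows "d \<in> selmer_phi p q Ds \<longleftrightarrow> (\<forall>l \<in> finite_S p q Ds. Cd_local_point l p q (prod_list Ds) d)"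
proof -
  have "d \<noteq> 0" using assms(1) unfolding QS2_def by auto
  then have "Cd_real_point p q (prod_list Ds) d" using real_point assms by blast
  then show ?thesis unfolding selmer_phi_def using assms(1) by auto
qed

theorem corollary2p6:
  fixes p q :: int and Ds :: "int list"
  assumes "prime p" and "prime q" and "odd p" and "odd q" and "q - p = 2"
    and "distinct Ds" and "\<forall>x \<in> set Ds. prime x"
    and "odd (prod_list Ds)" and "\<not> p dvd prod_list Ds" and "\<not> q dvd prod_list Ds"
  shows "(2 \<in> selmer_phi p q Ds \<longleftrightarrow>
            p mod 8 = 7 \<and> (\<forall>i < length Ds. Ds ! i mod 8 \<in> {1, 7}))
       \<and> (-2 \<in> selmer_phi p q Ds \<longleftrightarrow>
            p mod 8 = 1 \<and> (\<forall>i < length Ds. Ds ! i mod 8 \<in> {1, 3}))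
       \<and> (\<forall>i < length Ds. Ds ! i \<in> selmer_phi p q Ds \<longleftrightarrow>
            Ds ! i mod 4 = 1 \<and>
            (\<forall>j < length Ds. j \<noteq> i \<longrightarrow> Legendre (Ds ! j) (Ds ! i) = 1) \<and>
            Legendre p (Ds ! i) = 1 \<and> Legendre q (Ds ! i) = 1)
       \<and> (\<forall>i < length Ds. - (Ds ! i) \<in> selmer_phi p q Ds \<longleftrightarrow>
            Ds ! i mod 4 = 3 \<and>
            (\<forall>j < length Ds. j \<noteq> i \<longrightarrow> Legendre (Ds ! j) (Ds ! i) = 1) \<and>
            Legendre p (Ds ! i) = 1 \<and> Legendre q (Ds ! i) = 1)"
proof -
  note hp = assms(1) and hq = assms(2) and op = assms(3) and oq = assms(4)
  note dist = assms(6) and prDs = assms(7) and oD = assms(8) and npD = assms(9) and nqD = assms(10)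
  define D where "D = prod_list Ds"
  have qp: "q = p + 2" using assms(5) by simp
  have p2: "p > 2" using prime_odd_gt2[OF hp op] .
  have q2: "q > 2" using prime_odd_gt2[OF hq oq] .
  have Dpos: "D > 0" unfolding D_def using prod_pos prDs by blast
  have pq4: "4 dvd p + q"
  proof -
    obtain k where "p = 2*k + 1" using op by (meson oddE)
    then have "p + q = 4*(k+1)" using qp by simp
    then show ?thesis by (rule dvdI)
  qed
  have pq2': "p + q > 2" using p2 q2 by simp
  have split: "\<And>x. x \<in> set Ds \<Longrightarrow> D = x * prod_list (remove1 x Ds) \<and> \<not> x dvd prod_list (remove1 x Ds)"
  proof -
    fix x assume x: "x \<in> set Ds"
    have "D = x * prod_list (remove1 x Ds)" unfolding D_def using prod_remove1[OF x] .
    moreover have "\<not> x dvd prod_list (remove1 x Ds)"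
      using prime_not_dvd_prod[of x "remove1 x Ds"] prDs x dist by auto
    ultimately show "D = x * prod_list (remove1 x Ds) \<and> \<not> x dvd prod_list (remove1 x Ds)" by blast
  qed
  have xodd: "\<And>x. x \<in> set Ds \<Longrightarrow> odd x"
  proof -
    fix x assume x: "x \<in> set Ds"
    then have "x dvd D" using split by (metis dvd_triv_left)
    then show "odd x" using oD unfolding D_def by (meson dvd_trans)
  qed
  have xnp: "\<And>x. x \<in> set Ds \<Longrightarrow> x \<noteq> p \<and> x \<noteq> q"
  proof -
    fix x assume x: "x \<in> set Ds"
    then have "x dvd D" using split by (metis dvd_triv_left)
    then show "x \<noteq> p \<and> x \<noteq> q" using npD nqD unfolding D_def by auto
  qed
  have xpr: "\<And>x. x \<in> set Ds \<Longrightarrow> prime x" using prDs by blast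
  have inS: "\<And>x. x \<in> set Ds \<Longrightarrow> x \<in> finite_S p q Ds" unfolding finite_S_def by auto
  have S_cases: "\<And>l. l \<in> finite_S p q Ds \<Longrightarrow> l = 2 \<or> l = p \<or> l = q \<or> l \<in> set Ds"
    unfolding finite_S_def by auto
  have two_S: "2 \<in> finite_S p q Ds" "p \<in> finite_S p q Ds" "q \<in> finite_S p q Ds"
    unfolding finite_S_def by auto
  have sel: "\<And>d. d \<in> QS2 p q Ds \<Longrightarrow> d \<in> selmer_phi p q Ds \<longleftrightarrow> (\<forall>l \<in> finite_S p q Ds. Cd_local_point l p q D d)"
    using selmer_iff pq2' Dpos unfolding D_def by blast
  have q2s: "2 \<in> QS2 p q Ds" "-2 \<in> QS2 p q Ds" using qs2_prime[OF _ two_S(1)] by auto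
  have obs_Ds: "\<And>x d. x \<in> set Ds \<Longrightarrow> \<not> x dvd d \<Longrightarrow> Cd_local_point x p q D d \<Longrightarrow> QuadRes x d"
  proof -
    fix x d assume x: "x \<in> set Ds" and nd: "\<not> x dvd d" and loc: "Cd_local_point x p q D d"
    from split[OF x] have e: "D = x * prod_list (remove1 x Ds)" and n: "\<not> x dvd prod_list (remove1 x Ds)" by auto
    show "QuadRes x d" using obs_s[OF xpr[OF x] xodd[OF x] n nd] loc unfolding e by blast
  qed
  have nth_in: "\<And>i. i < length Ds \<Longrightarrow> Ds ! i \<in> set Ds" by simp
  have ex_nth: "\<And>x. x \<in> set Ds \<Longrightarrow> \<exists>i < length Ds. Ds ! i = x" by (simp add: in_set_conv_nth)
  have A1: "2 \<in> selmer_phi p q Ds \<longleftrightarrow> p mod 8 = 7 \<and> (\<forall>i < length Ds. Ds ! i mod 8 \<in> {1, 7})"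
  proof
    assume "2 \<in> selmer_phi p q Ds"
    then have loc: "\<forall>l \<in> finite_S p q Ds. Cd_local_point l p q D 2" using sel q2s by blast
    have m: "\<forall>x \<in> set Ds. x mod 8 = 1 \<or> x mod 8 = 7"
    proof
      fix x assume x: "x \<in> set Ds"
      have nd: "\<not> x dvd 2" using prime_not_dvd_2[OF xpr[OF x] xodd[OF x]] .
      have "QuadRes x 2" using obs_Ds[OF x nd] loc inS[OF x] by blast
      then have "Legendre 2 x = 1" using leg_QR nd by blast
      then show "x mod 8 = 1 \<or> x mod 8 = 7"
        using leg_two[OF xpr[OF x] prime_odd_gt2[OF xpr[OF x] xodd[OF x]]] by (auto split: if_splits)
    qed
    then have "D mod 8 = 1 \<or> D mod 8 = 7" unfolding D_def by (rule prod_mod8_17)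
    then have "16 dvd D^2 - 1" by (rule sq16)
    then have "p mod 8 = 7" using obs_2A[OF qp op] oD loc two_S unfolding D_def by blast
    then show "p mod 8 = 7 \<and> (\<forall>i < length Ds. Ds ! i mod 8 \<in> {1, 7})" using m by auto
  next
    assume h: "p mod 8 = 7 \<and> (\<forall>i < length Ds. Ds ! i mod 8 \<in> {1, 7})"
    have m: "\<forall>x \<in> set Ds. x mod 8 = 1 \<or> x mod 8 = 7" using h ex_nth by fastforce
    then have "D mod 8 = 1 \<or> D mod 8 = 7" unfolding D_def by (rule prod_mod8_17)
    then have D16: "16 dvd D^2 - 1" by (rule sq16)
    have "\<forall>l \<in> finite_S p q Ds. Cd_local_point l p q D 2"
    proof
      fix l assume l: "l \<in> finite_S p q Ds"
      show "Cd_local_point l p q D 2"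
      proof -
        { assume "l = 2" then have ?thesis using ex_2A[OF qp _ D16] h by simp }
        moreover
        { assume "l = p" then have ?thesis using loc_leg[OF hp op] leg_two[OF hp p2] h by simp }
        moreover
        { assume "l = q"
          have "p mod 8 = 7" using h by simp
          then have "q mod 8 = 1" using qp by presburger
          then have ?thesis using loc_leg[OF hq oq] leg_two[OF hq q2] \<open>l = q\<close> by simp }
        moreover
        { assume x: "l \<in> set Ds"
          have "Legendre 2 l = 1" using leg_two[OF xpr[OF x] prime_odd_gt2[OF xpr[OF x] xodd[OF x]]] m x by auto
          then have ?thesis using loc_leg[OF xpr[OF x] xodd[OF x]] by blast }
        ultimately show ?thesis using S_cases[OF l] by blast
      qed
    qed
    then show "2 \<in> selmer_phi p q Ds" using sel q2s by blast
  qed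
  have A2: "-2 \<in> selmer_phi p q Ds \<longleftrightarrow> p mod 8 = 1 \<and> (\<forall>i < length Ds. Ds ! i mod 8 \<in> {1, 3})"
  proof
    assume "-2 \<in> selmer_phi p q Ds"
    then have loc: "\<forall>l \<in> finite_S p q Ds. Cd_local_point l p q D (-2)" using sel q2s by blast
    have m: "\<forall>x \<in> set Ds. x mod 8 = 1 \<or> x mod 8 = 3"
    proof
      fix x assume x: "x \<in> set Ds"
      have nd: "\<not> x dvd -2" using prime_not_dvd_2[OF xpr[OF x] xodd[OF x]] by simp
      have "QuadRes x (-2)" using obs_Ds[OF x nd] loc inS[OF x] by blast
      then have "Legendre (-2) x = 1" using leg_QR nd by blast
      then show "x mod 8 = 1 \<or> x mod 8 = 3"
        using leg_neg2[OF xpr[OF x] prime_odd_gt2[OF xpr[OF x] xodd[OF x]]] by (auto split: if_splits)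
    qed
    then have "D mod 8 = 1 \<or> D mod 8 = 3" unfolding D_def by (rule prod_mod8_13)
    then have "p mod 8 = 1" using obs_2B[OF qp op] loc two_S by blast
    then show "p mod 8 = 1 \<and> (\<forall>i < length Ds. Ds ! i mod 8 \<in> {1, 3})" using m by auto
  next
    assume h: "p mod 8 = 1 \<and> (\<forall>i < length Ds. Ds ! i mod 8 \<in> {1, 3})"
    have m: "\<forall>x \<in> set Ds. x mod 8 = 1 \<or> x mod 8 = 3" using h ex_nth by fastforce
    then have D8: "D mod 8 = 1 \<or> D mod 8 = 3" unfolding D_def by (rule prod_mod8_13)
    have "\<forall>l \<in> finite_S p q Ds. Cd_local_point l p q D (-2)"
    proof
      fix l assume l: "l \<in> finite_S p q Ds"
      show "Cd_local_point l p q D (-2)"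
      proof -
        { assume "l = 2" then have ?thesis using ex_2B[OF qp _ D8] h by simp }
        moreover
        { assume "l = p" then have ?thesis using loc_leg[OF hp op] leg_neg2[OF hp p2] h by simp }
        moreover
        { assume "l = q"
          have "p mod 8 = 1" using h by simp
          then have "q mod 8 = 3" using qp by presburger
          then have ?thesis using loc_leg[OF hq oq] leg_neg2[OF hq q2] \<open>l = q\<close> by simp }
        moreover
        { assume x: "l \<in> set Ds"
          have "Legendre (-2) l = 1" using leg_neg2[OF xpr[OF x] prime_odd_gt2[OF xpr[OF x] xodd[OF x]]] m x by auto
          then have ?thesis using loc_leg[OF xpr[OF x] xodd[OF x]] by blast }
        ultimately show ?thesis using S_cases[OF l] by blast
      qed
    qed
    then show "-2 \<in> selmer_phi p q Ds" using sel q2s by blast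
  qed
  have B: "\<And>i (e::int). i < length Ds \<Longrightarrow> e = 1 \<or> e = -1 \<Longrightarrow>
     (e * Ds!i \<in> selmer_phi p q Ds \<longleftrightarrow> (e * Ds!i) mod 4 = 1 \<and>
       (\<forall>j < length Ds. j \<noteq> i \<longrightarrow> Legendre (Ds ! j) (Ds ! i) = 1) \<and>
       Legendre p (Ds ! i) = 1 \<and> Legendre q (Ds ! i) = 1)"
  proof -
    fix i and e :: int assume i: "i < length Ds" and e: "e = 1 \<or> e = -1"
    define r where "r = Ds ! i"
    have rS: "r \<in> set Ds" unfolding r_def using i by simp
    have rp: "prime r" and ro: "odd r" using xpr[OF rS] xodd[OF rS] by auto
    have r2: "r > 2" using prime_odd_gt2[OF rp ro] .
    have rnp: "r \<noteq> p" "r \<noteq> q" using xnp[OF rS] by auto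
    define D1 where "D1 = prod_list (remove1 r Ds)"
    have DD1: "D = r * D1" and nrD1: "\<not> r dvd D1" using split[OF rS] unfolding D1_def by auto
    have qs: "e*r \<in> QS2 p q Ds" using qs2_prime[OF rp inS[OF rS]] e by auto
    have oer: "odd (e*r)" using e ro by auto
    have oth: "\<And>s. s \<in> set Ds \<Longrightarrow> s \<noteq> r \<Longrightarrow> \<exists>j < length Ds. j \<noteq> i \<and> Ds ! j = s"
      using ex_nth r_def by blast
    have oth2: "\<And>j. j < length Ds \<Longrightarrow> j \<noteq> i \<Longrightarrow> Ds ! j \<noteq> r"
      using dist i unfolding r_def by (simp add: nth_eq_iff_index_eq)
    have ndvd_er: "\<And>s. prime s \<Longrightarrow> s \<noteq> r \<Longrightarrow> \<not> s dvd e*r"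
    proof
      fix s assume s: "prime s" "s \<noteq> r" "s dvd e*r"
      then have "s dvd r" using e by auto
      then show False using primes_dvd_imp_eq[OF s(1) rp] s(2) by blast
    qed
    have recip_s: "\<And>s. prime s \<Longrightarrow> odd s \<Longrightarrow> s \<noteq> r \<Longrightarrow> (e*r) mod 4 = 1 \<Longrightarrow> Legendre (e*r) s = Legendre s r"
      using recip_d[OF rp ro _ _ _ e] by metis
    show "e * Ds!i \<in> selmer_phi p q Ds \<longleftrightarrow> (e * Ds!i) mod 4 = 1 \<and>
       (\<forall>j < length Ds. j \<noteq> i \<longrightarrow> Legendre (Ds ! j) (Ds ! i) = 1) \<and>
       Legendre p (Ds ! i) = 1 \<and> Legendre q (Ds ! i) = 1"
      unfolding r_def[symmetric]
    proof
      assume "e * r \<in> selmer_phi p q Ds"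
      then have loc: "\<forall>l \<in> finite_S p q Ds. Cd_local_point l p q D (e*r)" using sel qs by blast
      have oDD: "odd D" using oD unfolding D_def .
      have m4: "(e*r) mod 4 = 1" using obs_2[OF oer oDD pq4] loc two_S by blast
      have Lp: "Legendre p r = 1"
      proof -
        have "(p+q)^2 - 4 = p*(4*q)" unfolding qp by (simp add: power2_eq_square algebra_simps)
        moreover have "\<not> p dvd 4*q"
        proof
          assume "p dvd 4*q"
          then have "p dvd 4 \<or> p dvd q" using hp prime_dvd_mult_iff by blast
          moreover have "\<not> p dvd 4"
          proof
            assume "p dvd 4"
            then have "p dvd 2*2" by simp
            then have "p dvd 2" using hp prime_dvd_mult_iff by blast
            then show False using prime_not_dvd_2[OF hp op] by blast
          qed
          moreover have "\<not> p dvd q" using primes_dvd_imp_eq[OF hp hq] qp by auto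
          ultimately show False by blast
        qed
        ultimately have "QuadRes p (e*r)" using obs_pq[OF hp _ _ npD[folded D_def] ndvd_er[OF hp rnp(1)[symmetric]]] loc two_S by blast
        then have "Legendre (e*r) p = 1" using leg_QR ndvd_er[OF hp rnp(1)[symmetric]] by blast
        then show ?thesis using recip_s[OF hp op rnp(1)[symmetric] m4] by simp
      qed
      have Lq: "Legendre q r = 1"
      proof -
        have "(p+q)^2 - 4 = q*(4*p)" unfolding qp by (simp add: power2_eq_square algebra_simps)
        moreover have "\<not> q dvd 4*p"
        proof
          assume "q dvd 4*p"
          then have "q dvd 4 \<or> q dvd p" using hq prime_dvd_mult_iff by blast
          moreover have "\<not> q dvd 4"
          proof
            assume "q dvd 4"
            then have "q dvd 2*2" by simp
            then have "q dvd 2" using hq prime_dvd_mult_iff by blast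
            then show False using prime_not_dvd_2[OF hq oq] by blast
          qed
          moreover have "\<not> q dvd p" using primes_dvd_imp_eq[OF hq hp] qp by auto
          ultimately show False by blast
        qed
        ultimately have "QuadRes q (e*r)" using obs_pq[OF hq _ _ nqD[folded D_def] ndvd_er[OF hq rnp(2)[symmetric]]] loc two_S by blast
        then have "Legendre (e*r) q = 1" using leg_QR ndvd_er[OF hq rnp(2)[symmetric]] by blast
        then show ?thesis using recip_s[OF hq oq rnp(2)[symmetric] m4] by simp
      qed
      have Ls: "\<forall>j < length Ds. j \<noteq> i \<longrightarrow> Legendre (Ds ! j) r = 1"
      proof (intro allI impI)
        fix j assume j: "j < length Ds" "j \<noteq> i"
        define s where "s = Ds ! j"
        have sS: "s \<in> set Ds" unfolding s_def using j by simp
        have sr: "s \<noteq> r" unfolding s_def using oth2 j by blast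
        have nd: "\<not> s dvd e*r" using ndvd_er[OF xpr[OF sS] sr] .
        have "QuadRes s (e*r)" using obs_Ds[OF sS nd] loc inS[OF sS] by blast
        then have "Legendre (e*r) s = 1" using leg_QR nd by blast
        then show "Legendre (Ds ! j) r = 1" using recip_s[OF xpr[OF sS] xodd[OF sS] sr m4] unfolding s_def by simp
      qed
      show "(e * r) mod 4 = 1 \<and> (\<forall>j < length Ds. j \<noteq> i \<longrightarrow> Legendre (Ds ! j) r = 1) \<and>
         Legendre p r = 1 \<and> Legendre q r = 1" using m4 Lp Lq Ls by blast
    next
      assume h: "(e * r) mod 4 = 1 \<and> (\<forall>j < length Ds. j \<noteq> i \<longrightarrow> Legendre (Ds ! j) r = 1) \<and>
         Legendre p r = 1 \<and> Legendre q r = 1"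
      then have m4: "(e*r) mod 4 = 1" and Ls: "\<forall>j < length Ds. j \<noteq> i \<longrightarrow> Legendre (Ds ! j) r = 1"
        and Lp: "Legendre p r = 1" and Lq: "Legendre q r = 1" by auto
      have "\<forall>l \<in> finite_S p q Ds. Cd_local_point l p q D (e*r)"
      proof
        fix l assume l: "l \<in> finite_S p q Ds"
        show "Cd_local_point l p q D (e*r)"
        proof -
          { assume "l = 2" then have ?thesis using ex_2d[OF m4 _ pq4] oD unfolding D_def by simp }
          moreover
          { assume "l = p"
            have "Legendre (e*r) p = 1" using recip_s[OF hp op rnp(1)[symmetric] m4] Lp by simp
            then have ?thesis using loc_leg[OF hp op] \<open>l = p\<close> by blast }
          moreover
          { assume "l = q"
            have "Legendre (e*r) q = 1" using recip_s[OF hq oq rnp(2)[symmetric] m4] Lq by simp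
            then have ?thesis using loc_leg[OF hq oq] \<open>l = q\<close> by blast }
          moreover
          { assume x: "l \<in> set Ds" "l \<noteq> r"
            obtain j where j: "j < length Ds" "j \<noteq> i" "Ds ! j = l" using oth[OF x] by blast
            have "Legendre (e*r) l = 1" using recip_s[OF xpr[OF x(1)] xodd[OF x(1)] x(2) m4] Ls j by auto
            then have ?thesis using loc_leg[OF xpr[OF x(1)] xodd[OF x(1)]] by blast }
          moreover
          { assume "l = r"
            have nrp: "\<not> r dvd p" using primes_dvd_imp_eq[OF rp hp] rnp by auto
            have nrq: "\<not> r dvd q" using primes_dvd_imp_eq[OF rp hq] rnp by auto
            have QRp: "QuadRes r p" using Lp leg_QR nrp by blast
            have QRq: "QuadRes r q" using Lq leg_QR nrq by blast
            have LD1: "Legendre D1 r = 1" unfolding D1_def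
            proof (rule leg_prod[OF rp r2], intro ballI)
              fix y assume y: "y \<in> set (remove1 r Ds)"
              then have yS: "y \<in> set Ds" and yr: "y \<noteq> r" using dist by auto
              obtain j where j: "j < length Ds" "j \<noteq> i" "Ds ! j = y" using oth[OF yS yr] by blast
              then show "Legendre y r = 1" using Ls by auto
            qed
            have Le: "Legendre (-e) r = 1"
            proof (cases "e = 1")
              case True
              then have "r mod 4 = 1" using m4 by simp
              then show ?thesis using leg_neg1[OF rp r2] True by simp
            next
              case False
              then have "e = -1" using e by simp
              moreover have "\<not> r dvd 1" using rp by auto
              moreover have "QuadRes r 1" unfolding QuadRes_def by (intro exI[of _ 1]) simp
              ultimately show ?thesis using leg_QR by auto
            qed
            have "Legendre (-e*D1) r = 1" using leg_mult[OF rp r2, of "-e" D1] Le LD1 by simp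
            moreover have "\<not> r dvd (-e*D1)" using e nrD1 by auto
            ultimately have QRd: "QuadRes r (-e*D1)" using leg_QR by blast
            have "Cd_local_point r p q (r*D1) (e*r)" using ex_r[OF rp ro e qp QRp nrp QRq nrq QRd nrD1] .
            then have ?thesis using \<open>l = r\<close> DD1 by simp }
          ultimately show ?thesis using S_cases[OF l] by blast
        qed
      qed
      then show "e * r \<in> selmer_phi p q Ds" using sel qs by blast
    qed
  qed
  have B1: "\<forall>i < length Ds. Ds ! i \<in> selmer_phi p q Ds \<longleftrightarrow>
            Ds ! i mod 4 = 1 \<and>
            (\<forall>j < length Ds. j \<noteq> i \<longrightarrow> Legendre (Ds ! j) (Ds ! i) = 1) \<and>
            Legendre p (Ds ! i) = 1 \<and> Legendre q (Ds ! i) = 1"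
    using B[of _ 1] by simp
  have B2: "\<forall>i < length Ds. - (Ds ! i) \<in> selmer_phi p q Ds \<longleftrightarrow>
            Ds ! i mod 4 = 3 \<and>
            (\<forall>j < length Ds. j \<noteq> i \<longrightarrow> Legendre (Ds ! j) (Ds ! i) = 1) \<and>
            Legendre p (Ds ! i) = 1 \<and> Legendre q (Ds ! i) = 1"
  proof (intro allI impI)
    fix i assume i: "i < length Ds"
    have "(-1 * Ds!i) mod 4 = 1 \<longleftrightarrow> Ds ! i mod 4 = 3" by presburger
    then show "- (Ds ! i) \<in> selmer_phi p q Ds \<longleftrightarrow>
            Ds ! i mod 4 = 3 \<and>
            (\<forall>j < length Ds. j \<noteq> i \<longrightarrow> Legendre (Ds ! j) (Ds ! i) = 1) \<and>
            Legendre p (Ds ! i) = 1 \<and> Legendre q (Ds ! i) = 1"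
      using B[OF i, of "-1"] by simp
  qed
  show ?thesis using A1 A2 B1 B2 by blast
qed

end
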